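(* Let $P$ be a finite ranked poset of rank $n$ with minimum $\hat0$ and maximum $\hat1$. If $P$ has an $S$-labeling $\Lambda$, then there is a (permutation) action of the symmetric group $S_n$ on the set $\mathcal{M}(P)$ of maximal chains of $P$ satisfying $\Lambda(\pi\cdot c)=\pi\cdot\Lambda(c)$ for all $\pi\in S_n$ and $c\in\mathcal{M}(P)$, where $S_n$ acts on label sequences by permuting coordinates; and this action is local.
   Context: A labeling of $P$ is a map $\Lambda:\mathcal{M}(P)\to L^n$, $L$ a totally ordered set, written $\Lambda(c)=(\Lambda_1(c),\dots,\Lambda_n(c))$. It is an $S$-labeling if it is injective and for every maximal chain $c=(\hat0=w^0\lessdot w^1\lessdot\cdots\lessdot w^n=\hat1)$ and every $i\in[n-1]$ with $\Lambda_i(c)\neq\Lambda_{i+1}(c)$, there is a unique maximal chain $c'$ differing from $c$ only in the element of rank $i$ such that $\Lambda(c')$ is obtained from $\Lambda(c)$ by interchanging the entries in positions $i$ and $i+1$. $S_n$ acts on $L^n$ by permuting coordinates: $(\pi\cdot\lambda)_j=\lambda_{\pi^{-1}(j)}$. An action of $S_n$ on $\mathcal{M}(P)$ (or on the vector space $\mathbf{C}\mathcal{M}(P)$ with basis $\mathcal{M}(P)$) is local if for every adjacent transposition $\sigma_i=(i,i+1)$ and every maximal chain $m$, $\sigma_i(m)$ is a linear combination of maximal chains that differ from $m$ at most in the element of rank $i$. *)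

theory Defs
  imports "HOL-Combinatorics.Combinatorics"
begin

definition poset_on :: "'a set \<Rightarrow> ('a \<Rightarrow> 'a \<Rightarrow> bool) \<Rightarrow> bool" where
  "poset_on P le \<longleftrightarrow>
     (\<forall>x\<in>P. le x x) \<and>
     (\<forall>x\<in>P. \<forall>y\<in>P. le x y \<and> le y x \<longrightarrow> x = y) \<and>
     (\<forall>x\<in>P. \<forall>y\<in>P. \<forall>z\<in>P. le x y \<and> le y z \<longrightarrow> le x z)"

definition covers :: "'a set \<Rightarrow> ('a \<Rightarrow> 'a \<Rightarrow> bool) \<Rightarrow> 'a \<Rightarrow> 'a \<Rightarrow> bool" where
  "covers P le x y \<longleftrightarrow> x \<in> P \<and> y \<in> P \<and> le x y \<and> x \<noteq> y \<and>
     \<not> (\<exists>z\<in>P. le x z \<and> z \<noteq> x \<and> le z y \<and> z \<noteq> y)"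

text \<open>Maximal chains of a finite bounded poset, written as lists
  (zero = w0 covered by w1 ... covered by wk = one); the element of rank i is the i-th entry.\<close>

definition max_chains :: "'a set \<Rightarrow> ('a \<Rightarrow> 'a \<Rightarrow> bool) \<Rightarrow> 'a \<Rightarrow> 'a \<Rightarrow> 'a list set" where
  "max_chains P le zero one =
     {c. c \<noteq> [] \<and> hd c = zero \<and> last c = one \<and>
         (\<forall>i. Suc i < length c \<longrightarrow> covers P le (c ! i) (c ! Suc i))}"

definition bounded_ranked_poset ::
  "'a set \<Rightarrow> ('a \<Rightarrow> 'a \<Rightarrow> bool) \<Rightarrow> 'a \<Rightarrow> 'a \<Rightarrow> nat \<Rightarrow> bool" where
  "bounded_ranked_poset P le zero one n \<longleftrightarrow>
     finite P \<and> poset_on P le \<and> zero \<in> P \<and> one \<in> P \<and>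
     (\<forall>x\<in>P. le zero x \<and> le x one) \<and>
     (\<forall>c\<in>max_chains P le zero one. length c = Suc n)"

text \<open>Label sequences in L^n are functions nat => L, only positions 1..n matter.
  S_n acts by (pi . lambda)_j = lambda_(pi^-1 j).\<close>

definition perm_labels :: "(nat \<Rightarrow> nat) \<Rightarrow> (nat \<Rightarrow> 'l) \<Rightarrow> (nat \<Rightarrow> 'l)" where
  "perm_labels \<pi> lab = (\<lambda>j. lab (inv \<pi> j))"

definition eq_labels :: "nat \<Rightarrow> (nat \<Rightarrow> 'l) \<Rightarrow> (nat \<Rightarrow> 'l) \<Rightarrow> bool" where
  "eq_labels n lab lab2 \<longleftrightarrow> (\<forall>j\<in>{1..n}. lab j = lab2 j)"

definition differ_only_at :: "nat \<Rightarrow> 'a list \<Rightarrow> 'a list \<Rightarrow> bool" where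
  "differ_only_at i c c' \<longleftrightarrow> length c' = length c \<and> (\<forall>j<length c. j \<noteq> i \<longrightarrow> c' ! j = c ! j)"

definition S_labeling ::
  "'a set \<Rightarrow> ('a \<Rightarrow> 'a \<Rightarrow> bool) \<Rightarrow> 'a \<Rightarrow> 'a \<Rightarrow> nat \<Rightarrow> ('a list \<Rightarrow> nat \<Rightarrow> 'l::linorder) \<Rightarrow> bool" where
  "S_labeling P le zero one n \<Lambda> \<longleftrightarrow>
     (\<forall>c\<in>max_chains P le zero one. \<forall>c'\<in>max_chains P le zero one.
        eq_labels n (\<Lambda> c) (\<Lambda> c') \<longrightarrow> c = c') \<and>
     (\<forall>c\<in>max_chains P le zero one. \<forall>i. 1 \<le> i \<and> i < n \<and> \<Lambda> c i \<noteq> \<Lambda> c (Suc i) \<longrightarrow>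
        (\<exists>!c'. c' \<in> max_chains P le zero one \<and> differ_only_at i c c' \<and>
               eq_labels n (\<Lambda> c') (perm_labels (Transposition.transpose i (Suc i)) (\<Lambda> c))))"

definition Sn_action :: "'a list set \<Rightarrow> nat \<Rightarrow> ((nat \<Rightarrow> nat) \<Rightarrow> 'a list \<Rightarrow> 'a list) \<Rightarrow> bool" where
  "Sn_action M n act \<longleftrightarrow>
     (\<forall>\<pi>. \<pi> permutes {1..n} \<longrightarrow> (\<forall>c\<in>M. act \<pi> c \<in> M)) \<and>
     (\<forall>c\<in>M. act id c = c) \<and>
     (\<forall>\<pi> \<sigma>. \<pi> permutes {1..n} \<longrightarrow> \<sigma> permutes {1..n} \<longrightarrow>
        (\<forall>c\<in>M. act (\<pi> \<circ> \<sigma>) c = act \<pi> (act \<sigma> c)))"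

definition local_action :: "'a list set \<Rightarrow> nat \<Rightarrow> ((nat \<Rightarrow> nat) \<Rightarrow> 'a list \<Rightarrow> 'a list) \<Rightarrow> bool" where
  "local_action M n act \<longleftrightarrow>
     (\<forall>i. 1 \<le> i \<and> i < n \<longrightarrow>
        (\<forall>m\<in>M. differ_only_at i m (act (Transposition.transpose i (Suc i)) m)))"

end

theory Submission
  imports Defs
begin

lemma perm_labels_cong:
  assumes "\<pi> permutes {1..n}" "eq_labels n f g"
  shows "eq_labels n (perm_labels \<pi> f) (perm_labels \<pi> g)"
proof -
  have "inv \<pi> j \<in> {1..n}" if "j \<in> {1..n}" for j
    using that permutes_in_image[OF permutes_inv[OF assms(1)], of j] by blast
  then show ?thesis using assms(2) unfolding eq_labels_def perm_labels_def by auto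
qed

lemma perm_labels_comp:
  assumes "\<pi> permutes S" "\<sigma> permutes S"
  shows "perm_labels (\<pi> \<circ> \<sigma>) f = perm_labels \<pi> (perm_labels \<sigma> f)"
  using o_inv_distrib[OF permutes_bij[OF assms(1)] permutes_bij[OF assms(2)]]
  unfolding perm_labels_def by auto

lemma perm_labels_id: "perm_labels id f = f"
  unfolding perm_labels_def by (simp add: inv_id)

lemma eq_labels_trans: "eq_labels n f g \<Longrightarrow> eq_labels n g h \<Longrightarrow> eq_labels n f h"
  unfolding eq_labels_def by auto

lemma eq_labels_sym: "eq_labels n f g \<Longrightarrow> eq_labels n g f"
  unfolding eq_labels_def by auto

lemma eq_labels_refl: "eq_labels n f f"
  unfolding eq_labels_def by auto

lemma transpose_perm: "1 \<le> a \<Longrightarrow> a \<le> n \<Longrightarrow> 1 \<le> b \<Longrightarrow> b \<le> n \<Longrightarrow>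
   Transposition.transpose a b permutes {1..n}"
  by (rule permutes_swap_id) auto

lemma transpose_shift: "a < b \<Longrightarrow> Transposition.transpose a (Suc b) =
  Transposition.transpose b (Suc b) \<circ> Transposition.transpose a b \<circ> Transposition.transpose b (Suc b)"
  by (auto simp: fun_eq_iff Transposition.transpose_def)

lemma equal_swap:
  assumes "f i = f (Suc i)"
  shows "eq_labels n f (perm_labels (Transposition.transpose i (Suc i)) f)"
  using assms unfolding eq_labels_def perm_labels_def
  by (auto simp: Transposition.transpose_def)

definition good :: "'a list set \<Rightarrow> nat \<Rightarrow> ('a list \<Rightarrow> nat \<Rightarrow> 'l) \<Rightarrow> (nat \<Rightarrow> nat) \<Rightarrow> bool" where
  "good M n \<Lambda> p \<longleftrightarrow> p permutes {1..n} \<and>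
     (\<forall>c\<in>M. \<exists>c'\<in>M. eq_labels n (\<Lambda> c') (perm_labels p (\<Lambda> c)))"

lemma good_id: "good M n \<Lambda> id"
  unfolding good_def perm_labels_id using eq_labels_refl permutes_id by blast

lemma good_comp:
  assumes "good M n \<Lambda> p" "good M n \<Lambda> q"
  shows "good M n \<Lambda> (p \<circ> q)"
  unfolding good_def
proof (intro conjI ballI)
  show "p \<circ> q permutes {1..n}" using assms unfolding good_def by (auto intro: permutes_compose)
  fix c assume c: "c \<in> M"
  obtain c1 where c1: "c1 \<in> M" "eq_labels n (\<Lambda> c1) (perm_labels q (\<Lambda> c))"
    using assms(2) c unfolding good_def by blast
  obtain c2 where c2: "c2 \<in> M" "eq_labels n (\<Lambda> c2) (perm_labels p (\<Lambda> c1))"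
    using assms(1) c1 unfolding good_def by blast
  have "eq_labels n (perm_labels p (\<Lambda> c1)) (perm_labels p (perm_labels q (\<Lambda> c)))"
    using perm_labels_cong assms(1) c1(2) unfolding good_def by blast
  moreover have "perm_labels p (perm_labels q (\<Lambda> c)) = perm_labels (p \<circ> q) (\<Lambda> c)"
    using perm_labels_comp assms unfolding good_def by metis
  ultimately show "\<exists>c'\<in>M. eq_labels n (\<Lambda> c') (perm_labels (p \<circ> q) (\<Lambda> c))"
    using c2 eq_labels_trans by metis
qed

lemma good_adj:
  assumes S: "S_labeling P le zero one n \<Lambda>" and i: "1 \<le> i" "i < n"
  shows "good (max_chains P le zero one) n \<Lambda> (Transposition.transpose i (Suc i))"
  unfolding good_def
proof (intro conjI ballI)
  show "Transposition.transpose i (Suc i) permutes {1..n}" using i by (intro transpose_perm) auto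
  fix c assume c: "c \<in> max_chains P le zero one"
  show "\<exists>c'\<in>max_chains P le zero one. eq_labels n (\<Lambda> c') (perm_labels (Transposition.transpose i (Suc i)) (\<Lambda> c))"
  proof (cases "\<Lambda> c i = \<Lambda> c (Suc i)")
    case True then show ?thesis using c equal_swap by blast
  next
    case False then show ?thesis using S c i unfolding S_labeling_def by blast
  qed
qed

lemma good_transp_aux:
  assumes S: "S_labeling P le zero one n \<Lambda>"
  shows "1 \<le> a \<Longrightarrow> a + d + 1 \<le> n \<Longrightarrow>
    good (max_chains P le zero one) n \<Lambda> (Transposition.transpose a (a + d + 1))"
proof (induction d)
  case 0 then show ?case using good_adj[OF S, of a] by simp
next
  case (Suc d)
  let ?b = "a + d + 1"
  have e: "Transposition.transpose a (a + Suc d + 1) =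
    Transposition.transpose ?b (Suc ?b) \<circ> Transposition.transpose a ?b \<circ> Transposition.transpose ?b (Suc ?b)"
    using transpose_shift[of a ?b] by simp
  have g1: "good (max_chains P le zero one) n \<Lambda> (Transposition.transpose ?b (Suc ?b))"
    using good_adj[OF S, of ?b] Suc by simp
  have g2: "good (max_chains P le zero one) n \<Lambda> (Transposition.transpose a ?b)" using Suc by simp
  show ?case unfolding e by (intro good_comp g1 g2)
qed

lemma good_transp:
  assumes S: "S_labeling P le zero one n \<Lambda>" and ab: "a \<in> {1..n}" "b \<in> {1..n}"
  shows "good (max_chains P le zero one) n \<Lambda> (Transposition.transpose a b)"
proof -
  have *: "good (max_chains P le zero one) n \<Lambda> (Transposition.transpose x y)"
    if "x < y" "x \<in> {1..n}" "y \<in> {1..n}" for x y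
    using good_transp_aux[OF S, of x "y - x - 1"] that by simp
  consider "a = b" | "a < b" | "b < a" by linarith
  then show ?thesis
  proof cases
    case 1 then show ?thesis by (simp add: good_id)
  next
    case 2 then show ?thesis using * ab by blast
  next
    case 3 then show ?thesis using *[of b a] ab by (simp add: transpose_commute)
  qed
qed

lemma good_all:
  assumes S: "S_labeling P le zero one n \<Lambda>" and p: "p permutes {1..n}"
  shows "good (max_chains P le zero one) n \<Lambda> p"
  using p finite_atLeastAtMost[of 1 n]
proof (induction rule: permutes_induct)
  case id then show ?case by (rule good_id)
next
  case (swap a b p) then show ?case using good_comp good_transp[OF S] by blast
qed

theorem theorem4p1:
  fixes P :: "'a set" and le :: "'a \<Rightarrow> 'a \<Rightarrow> bool" and zero one :: 'a and n :: nat
    and \<Lambda> :: "'a list \<Rightarrow> nat \<Rightarrow> 'l::linorder"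
  assumes "bounded_ranked_poset P le zero one n"
    and "S_labeling P le zero one n \<Lambda>"
  shows "\<exists>act. Sn_action (max_chains P le zero one) n act \<and>
           (\<forall>\<pi> c. \<pi> permutes {1..n} \<longrightarrow> c \<in> max_chains P le zero one \<longrightarrow>
              eq_labels n (\<Lambda> (act \<pi> c)) (perm_labels \<pi> (\<Lambda> c))) \<and>
           local_action (max_chains P le zero one) n act"
proof -
  let ?M = "max_chains P le zero one"
  define act where "act = (\<lambda>\<pi> c. THE c'. c' \<in> ?M \<and> eq_labels n (\<Lambda> c') (perm_labels \<pi> (\<Lambda> c)))"
  have inj: "\<And>c c'. c \<in> ?M \<Longrightarrow> c' \<in> ?M \<Longrightarrow> eq_labels n (\<Lambda> c) (\<Lambda> c') \<Longrightarrow> c = c'"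
    using assms(2) unfolding S_labeling_def by blast
  have uniq: "act \<pi> c = c'" if "c' \<in> ?M" "eq_labels n (\<Lambda> c') (perm_labels \<pi> (\<Lambda> c))" for \<pi> c c'
    unfolding act_def
  proof (rule the_equality)
    show "c' \<in> ?M \<and> eq_labels n (\<Lambda> c') (perm_labels \<pi> (\<Lambda> c))" using that by blast
    fix x assume "x \<in> ?M \<and> eq_labels n (\<Lambda> x) (perm_labels \<pi> (\<Lambda> c))"
    then show "x = c'" using inj that eq_labels_trans eq_labels_sym by metis
  qed
  have spec: "act \<pi> c \<in> ?M \<and> eq_labels n (\<Lambda> (act \<pi> c)) (perm_labels \<pi> (\<Lambda> c))"
    if tp: "\<pi> permutes {1..n}" and tc: "c \<in> ?M" for \<pi> c
  proof -
    obtain c' where "c' \<in> ?M" "eq_labels n (\<Lambda> c') (perm_labels \<pi> (\<Lambda> c))"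
      using good_all[OF assms(2) tp] tc unfolding good_def by blast
    then show ?thesis using uniq by metis
  qed
  have A: "Sn_action ?M n act"
    unfolding Sn_action_def
  proof (intro conjI allI impI ballI)
    fix \<pi> c assume "\<pi> permutes {1..n}" "c \<in> ?M"
    then show "act \<pi> c \<in> ?M" using spec by blast
  next
    fix c assume "c \<in> ?M"
    then show "act id c = c" using uniq[of c id c] by (simp add: perm_labels_id eq_labels_refl)
  next
    fix \<pi> \<sigma> c assume p: "\<pi> permutes {1..n}" "\<sigma> permutes {1..n}" and c: "c \<in> ?M"
    have s1: "act \<sigma> c \<in> ?M" "eq_labels n (\<Lambda> (act \<sigma> c)) (perm_labels \<sigma> (\<Lambda> c))" using spec p c by auto
    have s2: "act \<pi> (act \<sigma> c) \<in> ?M"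
      "eq_labels n (\<Lambda> (act \<pi> (act \<sigma> c))) (perm_labels \<pi> (\<Lambda> (act \<sigma> c)))"
      using spec p s1 by auto
    have "eq_labels n (perm_labels \<pi> (\<Lambda> (act \<sigma> c))) (perm_labels \<pi> (perm_labels \<sigma> (\<Lambda> c)))"
      using perm_labels_cong p s1 by blast
    moreover have "perm_labels \<pi> (perm_labels \<sigma> (\<Lambda> c)) = perm_labels (\<pi> \<circ> \<sigma>) (\<Lambda> c)"
      using perm_labels_comp p by metis
    ultimately have "eq_labels n (\<Lambda> (act \<pi> (act \<sigma> c))) (perm_labels (\<pi> \<circ> \<sigma>) (\<Lambda> c))"
      using s2 eq_labels_trans by metis
    then show "act (\<pi> \<circ> \<sigma>) c = act \<pi> (act \<sigma> c)" using uniq s2 by metis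
  qed
  have B: "local_action ?M n act"
    unfolding local_action_def
  proof (intro allI impI ballI)
    fix i m assume i: "1 \<le> i \<and> i < n" and m: "m \<in> ?M"
    show "differ_only_at i m (act (Transposition.transpose i (Suc i)) m)"
    proof (cases "\<Lambda> m i = \<Lambda> m (Suc i)")
      case True
      then have "act (Transposition.transpose i (Suc i)) m = m"
        using uniq m equal_swap by metis
      then show ?thesis by (simp add: differ_only_at_def)
    next
      case False
      then obtain c' where "c' \<in> ?M" "differ_only_at i m c'"
        "eq_labels n (\<Lambda> c') (perm_labels (Transposition.transpose i (Suc i)) (\<Lambda> m))"
        using assms(2) m i unfolding S_labeling_def by blast
      then show ?thesis using uniq by metis
    qed
  qed
  show ?thesis using A B spec by blast
qed

end
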